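(* Let $R$ be a semiprime ring which is both $2$-torsion free and $3$-torsion free, and let $T:R\to R$ be an additive map such that $T(x)x^3=0$ and $T(x^4)=0$ for all $x\in R$. Then $T(xy)=T(x)y$ for all $x,y\in R$.
   Context: $R$ is an associative ring. $R$ is $k$-torsion free if $kx=0$ implies $x=0$ for all $x\in R$. $R$ is semiprime if $aRa=\{0\}$ implies $a=0$. *)

theory Defs
  imports Main
begin

text \<open>An associative ring (not necessarily unital) is modelled by the type class ring.
  The integer multiple k x is the k-fold sum x + ... + x.\<close>

definition nsmul :: "nat \<Rightarrow> 'a::ring \<Rightarrow> 'a" where
  "nsmul k x = ((+) x ^^ k) 0"

definition semiprime :: "'a::ring itself \<Rightarrow> bool" where
  "semiprime _ \<longleftrightarrow> (\<forall>a::'a. (\<forall>r::'a. a * r * a = 0) \<longrightarrow> a = 0)"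

definition torsion_free :: "nat \<Rightarrow> 'a::ring itself \<Rightarrow> bool" where
  "torsion_free k _ \<longleftrightarrow> (\<forall>x::'a. nsmul k x = 0 \<longrightarrow> x = 0)"

end

theory Submission
  imports Defs
begin

fun pw :: "'a::ring \<Rightarrow> nat \<Rightarrow> 'a" where
  "pw x 0 = x"
| "pw x (Suc k) = pw x k * x"

lemma pw_left: "pw x (Suc k) = x * pw x k"
  by (induction k) (simp_all add: mult.assoc)

lemma pw_swap: "pw ((b::'a::ring) * r) (Suc k) = b * pw (r * b) k * r"
proof (induction k)
  case 0 then show ?case by (simp add: mult.assoc)
next
  case (Suc k)
  have "pw (b * r) (Suc (Suc k)) = pw (b*r) (Suc k) * (b * r)" by simp
  also have "\<dots> = b * pw (r * b) k * r * (b * r)" using Suc by simp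
  also have "\<dots> = b * (pw (r * b) k * (r * b)) * r" by (simp add: mult.assoc)
  finally show ?case by simp
qed

lemma pw_mult_closed:
  assumes "\<And>u r. P u \<Longrightarrow> P (u * r)" "P u"
  shows "P (pw u k)"
proof (induction k)
  case 0 then show ?case using assms(2) by simp
next
  case (Suc k) then show ?case using assms(1) by simp
qed

lemma c_aux:
  fixes a v :: "'a::ring"
  assumes "a * v = 0"
  shows "a * pw (a + v) k = pw a (Suc k)"
proof (induction k)
  case 0 then show ?case using assms by (simp add: distrib_left)
next
  case (Suc k)
  have "a * pw (a + v) (Suc k) = (a * pw (a + v) k) * (a + v)" by (simp only: pw.simps mult.assoc)
  also have "\<dots> = pw a (Suc k) * (a + v)" by (simp only: Suc)
  also have "\<dots> = pw a (Suc k) * a + pw a (Suc k) * v" by (simp only: distrib_left)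
  also have "pw a (Suc k) * v = pw a k * (a * v)" by (simp only: pw.simps mult.assoc)
  also have "\<dots> = 0" using assms by simp
  finally show ?case by simp
qed

lemma c_pow:
  fixes a v :: "'a::ring"
  assumes "a * v = 0"
  shows "pw (a + v) (Suc k) = pw a (Suc k) + v * pw (a + v) k"
proof -
  have "pw (a + v) (Suc k) = (a + v) * pw (a + v) k" by (simp only: pw_left)
  also have "\<dots> = a * pw (a + v) k + v * pw (a + v) k" by (simp only: distrib_right)
  finally show ?thesis using c_aux[OF assms] by simp
qed

lemma sign_pw:
  fixes z m :: "'a::ring"
  assumes "z * m = - z"
  shows "z * pw m K = (if even K then - z else z)"
proof (induction K)
  case 0 then show ?case using assms by simp
next
  case (Suc K)
  have "z * pw m (Suc K) = (z * pw m K) * m" by (simp add: mult.assoc)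
  then show ?case using Suc assms by (auto simp: minus_mult_left[symmetric])
qed

lemma levitzki_step:
  fixes P :: "'a::ring \<Rightarrow> bool"
  assumes sp: "semiprime TYPE('a)"
    and padd: "\<And>u v. P u \<Longrightarrow> P v \<Longrightarrow> P (u + v)"
    and pmul: "\<And>u r. P u \<Longrightarrow> P (u * r)"
    and nil: "\<And>u. P u \<Longrightarrow> pw u (Suc k) = 0"
    and Pa: "P a"
  shows "pw a k = 0"
proof -
  define y where "y = pw a k"
  have Py: "P y" unfolding y_def using pw_mult_closed[of P, OF pmul Pa] by blast
  have "y * x * y = 0" for x
  proof -
    define v where "v = y * x"
    have Pv: "P v" unfolding v_def using pmul Py by blast
    have "a * v = pw a (Suc k) * x" unfolding v_def y_def pw_left by (simp add: mult.assoc)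
    hence av: "a * v = 0" using nil[OF Pa] by simp
    define c where "c = a + v"
    have Pc: "P c" unfolding c_def using padd Pa Pv by blast
    have c0: "v * pw c k = 0"
      using c_pow[OF av, of k] nil[OF Pc] nil[OF Pa] unfolding c_def by simp
    show ?thesis
    proof (cases k)
      case 0
      have "v * v = 0" using nil[OF Pv] 0 by simp
      moreover have "v * c = v * a + v * v" unfolding c_def by (simp add: distrib_left)
      ultimately show ?thesis using c0 0 unfolding v_def y_def by simp
    next
      case (Suc j)
      define w where "w = pw c j"
      define m where "m = x * w"
      define z where "z = y * x * y"
      have Pw: "P w" unfolding w_def using pw_mult_closed[of P, OF pmul Pc] by blast
      have "pw c k = pw a k + v * w" using c_pow[OF av, of j] Suc unfolding c_def w_def by simp
      hence "0 = v * y + v * (v * w)" using c0 unfolding y_def by (simp add: distrib_left)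
      also have "v * (v * w) = z * m" unfolding v_def z_def m_def by (simp add: mult.assoc)
      also have "v * y = z" unfolding v_def z_def by simp
      finally have zm: "z * m = - z" by (simp add: eq_neg_iff_add_eq_0 add.commute)
      have "pw m (Suc (Suc k)) = x * pw (w * x) (Suc k) * w" unfolding m_def by (rule pw_swap)
      also have "pw (w * x) (Suc k) = 0" using nil pmul[OF Pw] by blast
      finally have "pw m (Suc (Suc k)) = 0" by simp
      hence "z * pw m (Suc (Suc k)) = 0" by simp
      with sign_pw[OF zm, of "Suc (Suc k)"] have "z = 0" by (simp split: if_splits)
      then show ?thesis unfolding z_def .
    qed
  qed
  then show ?thesis using sp unfolding semiprime_def y_def by blast
qed

lemma levitzki:
  fixes P :: "'a::ring \<Rightarrow> bool"
  assumes sp: "semiprime TYPE('a)"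
    and padd: "\<And>u v. P u \<Longrightarrow> P v \<Longrightarrow> P (u + v)"
    and pmul: "\<And>u r. P u \<Longrightarrow> P (u * r)"
  shows "(\<forall>u. P u \<longrightarrow> pw u k = 0) \<Longrightarrow> P a \<Longrightarrow> a = 0"
proof (induction k arbitrary: a)
  case 0 then show ?case by simp
next
  case (Suc k)
  have "\<forall>u. P u \<longrightarrow> pw u k = 0"
    using levitzki_step[OF sp padd pmul] Suc.prems(1) by blast
  then show ?case using Suc.IH Suc.prems(2) by blast
qed

lemma twelve: "pw (z::'a::ring) 11 = (z*z*z*z) * (z*z*z*z) * (z*z*z*z)"
  by (simp add: numeral_eq_Suc mult.assoc)

lemma annih_zero:
  fixes b :: "'a::ring"
  assumes sp: "semiprime TYPE('a)"
    and h: "\<And>x. b * ((x*x*x*x) * (x*x*x*x) * (x*x*x*x)) = 0"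
  shows "b = 0"
proof -
  define P where "P u = (\<exists>r. u = b * r)" for u
  have padd: "P u \<Longrightarrow> P v \<Longrightarrow> P (u + v)" for u v
    unfolding P_def by (metis distrib_left)
  have pmul: "P u \<Longrightarrow> P (u * r)" for u r
    unfolding P_def by (metis mult.assoc)
  have nil: "\<forall>u. P u \<longrightarrow> pw u 12 = 0"
  proof (intro allI impI)
    fix u assume "P u"
    then obtain r where u: "u = b * r" unfolding P_def by blast
    have "pw u 12 = b * pw (r * b) 11 * r" unfolding u
      using pw_swap[of b r 11] by (simp add: numeral_eq_Suc)
    also have "b * pw (r * b) 11 = 0" using h twelve by metis
    finally show "pw u 12 = 0" by simp
  qed
  have "b * r = 0" for r
    using levitzki[OF sp padd pmul, of 12 "b * r"] nil unfolding P_def by blast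
  hence "b * r * b = 0" for r by simp
  then show ?thesis using sp unfolding semiprime_def by blast
qed

lemma linz:
  fixes T :: "'a::ring \<Rightarrow> 'a"
  assumes add: "\<And>x y. T (x + y) = T x + T y"
  shows "T (x + y) * ((x + y) * (x + y) * (x + y)) = T x * (x*x*x) +
     (T y * (x * x * x) + T x * (y * x * x + x * y * x + x * x * y)) +
     (T y * (y * x * x + x * y * x + x * x * y) + T x * (y * y * x + y * x * y + x * y * y)) +
     (T y * (y * y * x + y * x * y + x * y * y) + T x * (y * y * y)) + T y * (y*y*y)"
  unfolding add by (simp add: distrib_left distrib_right add_ac mult.assoc)

theorem lemma2p5:
  fixes T :: "'a::ring \<Rightarrow> 'a"
  assumes "semiprime TYPE('a)"
    and "torsion_free 2 TYPE('a)"
    and "torsion_free 3 TYPE('a)"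
    and "\<And>x y. T (x + y) = T x + T y"
    and "\<And>x. T x * (x * x * x) = 0"
    and "\<And>x. T (x * x * x * x) = 0"
  shows "\<forall>x y. T (x * y) = T x * y"
proof -
  note add = assms(4) and cub = assms(5) and four = assms(6)
  have tf2: "z = 0" if z: "z + z = 0" for z :: 'a
  proof -
    have "nsmul 2 z = z + z" by (simp add: nsmul_def numeral_eq_Suc)
    with assms(2) z show "z = 0" unfolding torsion_free_def by metis
  qed
  have tf3: "z = 0" if z: "z + z + z = 0" for z :: 'a
  proof -
    have "nsmul 3 z = z + z + z" by (simp add: nsmul_def numeral_eq_Suc add.assoc)
    with assms(3) z show "z = 0" unfolding torsion_free_def by metis
  qed
  have T0: "T 0 = 0" using add[of 0 0] by simp
  have Tneg: "T (- y) = - T y" for y using add[of y "- y"] T0 by (simp add: eq_neg_iff_add_eq_0 add.commute)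
  have L1: "T y * (x * x * x) + T x * (y * x * x + x * y * x + x * x * y) = 0" for x y
  proof -
    define A1 where "A1 y = T y * (x * x * x) + T x * (y * x * x + x * y * x + x * x * y)" for y
    define A2 where "A2 y = T y * (y * x * x + x * y * x + x * x * y) + T x * (y * y * x + y * x * y + x * y * y)" for y
    define A3 where "A3 y = T y * (y * y * x + y * x * y + x * y * y) + T x * (y * y * y)" for y
    have e: "A1 y + A2 y + A3 y = 0" for y
      using linz[of T x y, OF add] cub[of "x+y"] cub[of x] cub[of y] unfolding A1_def A2_def A3_def
      by (simp add: add.assoc)
    have n1: "A1 (- y) = - A1 y" unfolding A1_def Tneg by (simp add: ring_distribs)
    have n2: "A2 (- y) = A2 y" unfolding A2_def Tneg by (simp add: ring_distribs)
    have n3: "A3 (- y) = - A3 y" unfolding A3_def Tneg by (simp add: ring_distribs)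
    have d1: "A1 (y + y) = A1 y + A1 y" unfolding A1_def add by (simp add: distrib_left distrib_right add_ac mult.assoc)
    have d2: "A2 (y + y) = (A2 y + A2 y) + (A2 y + A2 y)" unfolding A2_def add by (simp add: distrib_left distrib_right add_ac mult.assoc)
    have d3: "A3 (y + y) = ((A3 y + A3 y) + (A3 y + A3 y)) + ((A3 y + A3 y) + (A3 y + A3 y))"
      unfolding A3_def add by (simp add: distrib_left distrib_right add_ac mult.assoc)
    have "A2 y + A2 y = (A1 y + A2 y + A3 y) + (A1 (- y) + A2 (- y) + A3 (- y))"
      unfolding n1 n2 n3 by (simp add: algebra_simps)
    also have "\<dots> = 0" using e[of y] e[of "- y"] by simp
    finally have A2: "A2 y = 0" by (rule tf2)
    have A13: "A1 y = - A3 y" using e[of y] A2 by (simp add: eq_neg_iff_add_eq_0)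
    have "(A3 y + A3 y + A3 y) + (A3 y + A3 y + A3 y) = A1 (y + y) + A2 (y + y) + A3 (y + y)"
      unfolding d1 d2 d3 A2 A13 by (simp add: algebra_simps)
    also have "\<dots> = 0" using e[of "y + y"] by simp
    finally have "A3 y + A3 y + A3 y = 0" by (rule tf2)
    hence "A3 y = 0" by (rule tf3)
    thus ?thesis using A13 unfolding A1_def by simp
  qed
  have "T y = 0" for y
  proof (rule annih_zero[OF assms(1)])
    fix x
    show "T y * ((x*x*x*x) * (x*x*x*x) * (x*x*x*x)) = 0"
      using L1[of y "x*x*x*x"] four[of x] by simp
  qed
  then show ?thesis by simp
qed

end
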